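(* There exists an absolute constant $c_3>0$ such that the following holds. Let $p>2$ be a prime and $g$ a primitive root modulo $p$. Let $a\ge0$, $r>0$, $N>0$ be integers with $\{a+r,a+2r,\dots,a+Nr\}\subset[1,p-1]$, and let $\mathcal{L}(g)=\{\log_g(a+jr)\colon 1\le j\le N\}$. Then for any $\delta>0$ and any subinterval of $[0,p-1]$ of length $M>0$ such that $MN>\frac{c_3}{\delta}p^{3/2}\log^2 p$, the number of elements of $\mathcal{L}(g)$ lying in that subinterval is at least $(1-\delta)\frac{MN}{p}$ and at most $(1+\delta)\frac{MN}{p}$.
   Context: For $x$ coprime to $p$, the discrete logarithm $\log_g x$ is the smallest integer $n\ge 0$ with $g^n\equiv x\pmod p$. $\log$ without subscript denotes the natural logarithm. *)

theory Defs
  imports "HOL-Number_Theory.Number_Theory"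
begin

definition dlog :: "nat \<Rightarrow> nat \<Rightarrow> nat \<Rightarrow> nat" where
  "dlog p g x = (LEAST n. [g ^ n = x] (mod p))"

end

theory Submission imports Defs "HOL-Analysis.Harmonic_Numbers" "HOL-Analysis.Complex_Transcendental" begin

definition ex :: "nat \<Rightarrow> int \<Rightarrow> complex" where
  "ex d x = cis (2 * pi * of_int x / of_nat d)"

lemma ex_add: "ex d (x + y) = ex d x * ex d y"
  by (simp add: ex_def cis_mult add_divide_distrib distrib_left)

lemma ex_0 [simp]: "ex d 0 = 1"
  by (simp add: ex_def)

lemma norm_ex [simp]: "norm (ex d x) = 1"
  by (simp add: ex_def)

lemma ex_neg: "ex d (- x) = cnj (ex d x)"
  by (simp add: ex_def cis_cnj)

lemma ex_mult_d: "d > 0 \<Longrightarrow> ex d (int d * k) = 1"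
proof -
  assume "d > 0"
  have "2 * pi * of_int (int d * k) / of_nat d = 2 * pi * of_int k" using \<open>d>0\<close> by simp
  thus ?thesis unfolding ex_def by simp
qed

lemma ex_mod: "d > 0 \<Longrightarrow> ex d (x mod int d) = ex d x"
proof -
  assume d: "d > 0"
  have "x = x mod int d + int d * (x div int d)" by simp
  hence "ex d x = ex d (x mod int d) * ex d (int d * (x div int d))" by (metis ex_add)
  thus ?thesis using ex_mult_d[OF d] by simp
qed

lemma ex_cong: "d > 0 \<Longrightarrow> x mod int d = y mod int d \<Longrightarrow> ex d x = ex d y"
  by (metis ex_mod)

lemma ex_power: "ex d x ^ n = ex d (int n * x)"
  unfolding ex_def Complex.DeMoivre by (simp add: algebra_simps)


lemma norm_1_minus_cis2: "norm (1 - cis (2 * y)) = 2 * \<bar>sin y\<bar>"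
proof -
  have "1 - cis (2*y) = cis y * (cis (-y) - cis y)"
    by (simp add: algebra_simps cis_mult)
  also have "cis (-y) - cis y = - (2 * \<i> * complex_of_real (sin y))"
    by (simp add: complex_eq_iff)
  finally show ?thesis by (simp add: norm_mult)
qed

lemma sin_ge_half: assumes "0 \<le> y" "y \<le> pi / 2" shows "y / 2 \<le> sin y"
proof -
  have "\<bar>sin y - (\<Sum>m<3. sin_coeff m * y ^ m)\<bar> \<le> inverse (fact 3) * \<bar>y\<bar> ^ 3"
    by (rule Maclaurin_sin_bound)
  moreover have "(\<Sum>m<3. sin_coeff m * y ^ m) = y"
    by (simp add: numeral_3_eq_3 sin_coeff_def)
  ultimately have h0: "\<bar>sin y - y\<bar> \<le> y^3/6" using assms by (simp add: fact_numeral)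
  have h: "y - y^3/6 \<le> sin y" using h0 abs_ge_minus_self[of "sin y - y"] by linarith
  have "pi \<le> 3.2" using pi_approx(2) by simp
  hence "y \<le> 1.6" using assms by linarith
  hence "y * y \<le> 1.6 * 1.6" using assms by (intro mult_mono) auto
  hence "y^2 \<le> 3" by (simp add: power2_eq_square)
  hence "y^3 \<le> 3 * y" using assms by (metis mult_right_mono power2_eq_square power3_eq_cube mult.commute)
  thus ?thesis using h by linarith
qed

lemma norm_1_minus_ex_small:
  assumes "0 < c" "2 * c \<le> int d"
  shows "pi * c / d \<le> norm (1 - ex d c)"
proof -
  define y where "y = pi * c / d"
  have dpos: "d > 0" using assms by simp
  have "ex d c = cis (2 * y)" by (simp add: ex_def y_def algebra_simps)
  hence n: "norm (1 - ex d c) = 2 * \<bar>sin y\<bar>" by (simp add: norm_1_minus_cis2)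
  have y0: "0 \<le> y" using assms dpos by (simp add: y_def)
  have "y \<le> pi / 2"
  proof -
    have "real_of_int c / d \<le> 1/2" using assms dpos by (simp add: field_simps)
    hence "pi * (real_of_int c / d) \<le> pi * (1/2)" by (intro mult_left_mono) auto
    thus ?thesis by (simp add: y_def)
  qed
  hence "y / 2 \<le> sin y" by (rule sin_ge_half[OF y0])
  thus ?thesis using n y0 by (simp add: y_def)
qed

definition mm :: "nat \<Rightarrow> int \<Rightarrow> real" where
  "mm d c = real (min (nat (c mod int d)) (d - nat (c mod int d)))"

lemma mm_pos: "d > 0 \<Longrightarrow> \<not> int d dvd c \<Longrightarrow> mm d c > 0"
proof -
  assume d: "d > 0" and nd: "\<not> int d dvd c"
  have "c mod int d \<noteq> 0" using nd by (simp add: dvd_eq_mod_eq_0)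
  moreover have "c mod int d \<ge> 0" "c mod int d < int d" using d by auto
  ultimately show ?thesis unfolding mm_def by auto
qed

lemma norm_1_minus_ex:
  assumes d: "d > 0" and nd: "\<not> int d dvd c"
  shows "pi * mm d c / d \<le> norm (1 - ex d c)"
proof -
  define c' where "c' = c mod int d"
  have c0: "0 < c'" "c' < int d" using d nd by (auto simp: c'_def dvd_eq_mod_eq_0 order_le_neq_trans)
  have e: "ex d c = ex d c'" using ex_mod[OF d] by (simp add: c'_def)
  show ?thesis
  proof (cases "2 * c' \<le> int d")
    case True
    hence "mm d c = c'" using c0 by (simp add: mm_def c'_def[symmetric] min_def)
    thus ?thesis using norm_1_minus_ex_small[OF c0(1) True] e by simp
  next
    case False
    hence mmv: "mm d c = int d - c'" using c0 by (simp add: mm_def c'_def[symmetric] min_def of_nat_diff)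
    have "ex d (int d - c') = ex d (- c')"
      using ex_add[of d "int d" "-c'"] ex_mult_d[OF d, of 1] by simp
    also have "\<dots> = cnj (ex d c)" by (simp add: ex_neg e)
    finally have "norm (1 - ex d (int d - c')) = norm (1 - ex d c)"
      by (metis complex_cnj_diff complex_cnj_one complex_mod_cnj)
    moreover have "pi * (int d - c') / d \<le> norm (1 - ex d (int d - c'))"
      using False c0 by (intro norm_1_minus_ex_small) auto
    ultimately show ?thesis using mmv by simp
  qed
qed

lemma geom_bound:
  assumes d: "d > 0" and nd: "\<not> int d dvd c"
  shows "norm (\<Sum>t\<in>{lo..<hi::nat}. ex d (c * int t)) \<le> d / mm d c"
proof -
  define z where "z = ex d c"
  have mp: "mm d c > 0" by (rule mm_pos[OF d nd])
  have nz: "pi * mm d c / d \<le> norm (1 - z)" unfolding z_def by (rule norm_1_minus_ex[OF d nd])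
  have pos: "0 < pi * mm d c / d" using mp d by simp
  hence z1: "z \<noteq> 1" using nz by auto
  have "(\<Sum>t\<in>{lo..<hi}. ex d (c * int t)) = (\<Sum>t\<in>{lo..<hi}. z ^ t)"
    by (simp add: z_def ex_power mult.commute)
  also have "\<dots> = (\<Sum>i<hi-lo. z ^ (i + lo))"
  proof (cases "lo \<le> hi")
    case True
    have "{lo..<hi} = (\<lambda>i. i + lo) ` {..<hi-lo}"
    proof (intro equalityI subsetI)
      fix x assume "x \<in> {lo..<hi}"
      thus "x \<in> (\<lambda>i. i + lo) ` {..<hi-lo}" by (intro image_eqI[of _ _ "x - lo"]) auto
    qed auto
    thus ?thesis by (simp add: sum.reindex inj_on_def)
  qed simp
  also have "\<dots> = z ^ lo * (\<Sum>i<hi-lo. z ^ i)" by (simp add: sum_distrib_left power_add mult.commute)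
  also have "\<dots> = z ^ lo * ((z ^ (hi - lo) - 1) / (z - 1))" using z1 by (simp add: geometric_sum)
  finally have eq: "(\<Sum>t\<in>{lo..<hi}. ex d (c * int t)) = z ^ lo * ((z ^ (hi - lo) - 1) / (z - 1))" .
  have nzz: "norm z = 1" by (simp add: z_def)
  have "norm (z ^ (hi - lo) - 1) \<le> 2"
    using norm_triangle_ineq4[of "z ^ (hi - lo)" 1] by (simp add: norm_power nzz)
  moreover have "norm (z - 1) = norm (1 - z)" by (simp add: norm_minus_commute)
  ultimately have "norm (z ^ lo * ((z ^ (hi - lo) - 1) / (z - 1))) \<le> 2 / norm (1 - z)"
    by (simp add: norm_mult norm_power nzz norm_divide divide_right_mono)
  also have "\<dots> \<le> 2 / (pi * mm d c / d)"
  proof -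
    have "0 < norm (1 - z)" using nz pos by linarith
    hence pp: "0 < norm (1 - z) * (pi * mm d c / d)" using pos by (rule mult_pos_pos)
    show ?thesis by (rule divide_left_mono[OF nz _ pp]) simp
  qed
  also have "\<dots> \<le> d / mm d c"
    using mp d pi_gt3 by (simp add: field_simps)
  finally show ?thesis using eq by simp
qed


lemma ex_ne_1: "d > 0 \<Longrightarrow> \<not> int d dvd c \<Longrightarrow> ex d c \<noteq> 1"
proof
  assume d: "d > 0" and nd: "\<not> int d dvd c" and e: "ex d c = 1"
  have "pi * mm d c / d \<le> norm (1 - ex d c)" by (rule norm_1_minus_ex[OF d nd])
  moreover have "0 < pi * mm d c / d" using mm_pos[OF d nd] d by simp
  ultimately show False using e by simp
qed

lemma ortho:
  assumes d: "d > 0"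
  shows "(\<Sum>b<d. ex d (int b * x)) = (if int d dvd x then of_nat d else 0)"
proof -
  define z where "z = ex d x"
  have zp: "ex d (int b * x) = z ^ b" for b by (simp add: z_def ex_power)
  show ?thesis
  proof (cases "int d dvd x")
    case True
    then obtain k where "x = int d * k" by (auto simp: dvd_def)
    hence "z = 1" using ex_mult_d[OF d] by (simp add: z_def)
    thus ?thesis using True by (simp add: zp)
  next
    case False
    hence z1: "z \<noteq> 1" using ex_ne_1[OF d] by (simp add: z_def)
    have "z ^ d = 1" using zp[of d] ex_mult_d[OF d, of x] by simp
    thus ?thesis using False z1 by (simp add: zp geometric_sum)
  qed
qed

lemma mm_mod: "d > 0 \<Longrightarrow> mm d (c mod int d) = mm d c"
  by (simp add: mm_def)

lemma harm_bound: "n \<ge> 1 \<Longrightarrow> (harm n :: real) \<le> 1 + ln n"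
  using euler_mascheroni_sequence_decreasing[of 1 n] by (simp add: harm_def)

lemma sum_inv_bound:
  assumes "d \<ge> 2"
  shows "(\<Sum>c\<in>{1..<d}. real d / mm d (int c)) \<le> 2 * real d * (1 + ln d)"
proof -
  have mmv: "mm d (int c) = real (min c (d - c))" if "c \<in> {1..<d}" for c
    using that by (simp add: mm_def nat_mod_as_int[symmetric] flip: of_nat_mod)
  have "(\<Sum>c\<in>{1..<d}. real d / mm d (int c)) \<le> (\<Sum>c\<in>{1..<d}. real d * (1 / real c + 1 / real (d - c)))"
  proof (rule sum_mono)
    fix c assume c: "c \<in> {1..<d}"
    have "1 / real (min c (d - c)) \<le> 1 / real c + 1 / real (d - c)"
      using c by (cases "c \<le> d - c") (auto simp: min_def)
    thus "real d / mm d (int c) \<le> real d * (1 / real c + 1 / real (d - c))"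
      using mmv[OF c] by (simp add: divide_inverse mult_left_mono)
  qed
  also have "\<dots> = real d * ((\<Sum>c\<in>{1..<d}. 1 / real c) + (\<Sum>c\<in>{1..<d}. 1 / real (d - c)))"
    by (simp only: distrib_left sum_distrib_left sum.distrib)
  also have "(\<Sum>c\<in>{1..<d}. 1 / real (d - c)) = (\<Sum>c\<in>{1..<d}. 1 / real c)"
  proof (rule sum.reindex_bij_witness[of _ "\<lambda>c. d - c" "\<lambda>c. d - c"]) qed auto
  also have "(\<Sum>c\<in>{1..<d}. 1 / real c) = harm (d - 1)"
    unfolding harm_def using assms by (intro sum.cong) (auto simp: divide_inverse)
  also have "\<dots> \<le> 1 + ln (d - 1)" using harm_bound[of "d - 1"] assms by simp
  also have "\<dots> \<le> 1 + ln d" using assms by simp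
  finally show ?thesis using assms by (simp add: mult_left_mono algebra_simps)
qed

lemma sum_inv_bound_r:
  assumes d: "d \<ge> 2" and cop: "coprime (int d) r"
  shows "(\<Sum>b\<in>{1..<d}. real d / mm d (int b * r)) \<le> 2 * real d * (1 + ln d)"
proof -
  define \<phi> where "\<phi> b = nat ((int b * r) mod int d)" for b
  have dp: "d > 0" using d by simp
  have ndvd: "\<not> int d dvd int b * r" if "b \<in> {1..<d}" for b
  proof
    assume "int d dvd int b * r"
    hence "int d dvd int b" using cop by (simp add: coprime_dvd_mult_left_iff)
    thus False using that by (auto dest: zdvd_imp_le)
  qed
  have into: "\<phi> ` {1..<d} \<subseteq> {1..<d}"
  proof
    fix y assume "y \<in> \<phi> ` {1..<d}"
    then obtain b where b: "b \<in> {1..<d}" "y = \<phi> b" by auto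
    define m where "m = (int b * r) mod int d"
    have "m \<noteq> 0" using ndvd[OF b(1)] by (simp add: m_def dvd_eq_mod_eq_0)
    moreover have "0 \<le> m" "m < int d" using dp by (auto simp: m_def)
    ultimately have "1 \<le> nat m" "nat m < d" by auto
    thus "y \<in> {1..<d}" using b by (auto simp: \<phi>_def m_def)
  qed
  have inj: "inj_on \<phi> {1..<d}"
  proof
    fix b b' assume b: "b \<in> {1..<d}" and b': "b' \<in> {1..<d}" and e: "\<phi> b = \<phi> b'"
    have "(int b * r) mod int d = (int b' * r) mod int d"
      using e dp unfolding \<phi>_def by (subst (asm) nat_eq_iff2) auto
    hence "int d dvd (int b - int b') * r" by (simp add: mod_eq_dvd_iff left_diff_distrib)
    hence "int d dvd (int b - int b')" using cop by (simp add: coprime_dvd_mult_left_iff)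
    hence "[int b = int b'] (mod int d)" by (simp add: cong_iff_dvd_diff)
    hence "int b mod int d = int b' mod int d" by (simp add: cong_def)
    thus "b = b'" using b b' by simp
  qed
  have img: "\<phi> ` {1..<d} = {1..<d}" by (rule endo_inj_surj[OF _ into inj]) simp
  have "(\<Sum>b\<in>{1..<d}. real d / mm d (int b * r)) = (\<Sum>b\<in>{1..<d}. real d / mm d (int (\<phi> b)))"
    using dp by (intro sum.cong) (auto simp: \<phi>_def mm_mod)
  also have "\<dots> = (\<Sum>c\<in>\<phi> ` {1..<d}. real d / mm d (int c))"
    by (rule sum.reindex[OF inj, symmetric, unfolded comp_def])
  also have "\<dots> \<le> 2 * real d * (1 + ln d)" using img sum_inv_bound[OF d] by simp
  finally show ?thesis .
qed


lemma gen_bij: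
  assumes p: "prime p" and g: "residue_primroot p g"
  shows "bij_betw (\<lambda>i. g ^ i mod p) {..<p - 1} {0<..<p}"
  using residue_primroot_is_generator[of p g] g prime_gt_1_nat[OF p]
  by (simp add: totient_prime[OF p] totatives_prime[OF p])

lemma g_not_dvd:
  assumes p: "prime p" and g: "residue_primroot p g"
  shows "\<not> p dvd g"
proof
  assume "p dvd g"
  moreover have "coprime p g" using g by (simp add: residue_primroot_def)
  ultimately show False using p by (metis coprime_absorb_left not_prime_unit)
qed

lemma pow_mod_q:
  assumes p: "prime p" and g: "residue_primroot p g"
  shows "[g ^ n = g ^ (n mod (p - 1))] (mod p)"
proof -
  have f: "[g ^ (p - 1) = 1] (mod p)" by (rule fermat_theorem[OF p g_not_dvd[OF p g]])
  have "g ^ n = g ^ ((p - 1) * (n div (p - 1)) + n mod (p - 1))" by simp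
  also have "\<dots> = (g ^ (p - 1)) ^ (n div (p - 1)) * g ^ (n mod (p - 1))"
    by (simp only: power_add power_mult)
  also have "[\<dots> = 1 ^ (n div (p - 1)) * g ^ (n mod (p - 1))] (mod p)"
    by (intro cong_mult cong_pow f cong_refl)
  finally show ?thesis by simp
qed

lemma pow_eq_1:
  assumes p: "prime p" and g: "residue_primroot p g" and t: "t < p - 1"
  shows "[g ^ t = 1] (mod p) \<longleftrightarrow> t = 0"
proof -
  have "ord p g = p - 1" using g p by (simp add: residue_primroot_def totient_prime)
  hence "[g ^ t = 1] (mod p) \<longleftrightarrow> (p - 1) dvd t" by (simp add: ord_divides')
  also have "\<dots> \<longleftrightarrow> t = 0" using t by (auto simp: nat_dvd_not_less)
  finally show ?thesis .
qed

lemma dlog_props: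
  assumes p: "prime p" and g: "residue_primroot p g" and x: "0 < x" "x < p"
  shows "dlog p g x < p - 1" "[g ^ dlog p g x = x] (mod p)"
    "\<And>s. s < p - 1 \<Longrightarrow> [g ^ s = x] (mod p) \<longleftrightarrow> s = dlog p g x"
proof -
  have bij: "bij_betw (\<lambda>i. g ^ i mod p) {..<p - 1} {0<..<p}" by (rule gen_bij[OF p g])
  have "x \<in> (\<lambda>i. g ^ i mod p) ` {..<p - 1}" using bij x by (simp add: bij_betw_def)
  then obtain i where i: "i < p - 1" "g ^ i mod p = x" by auto
  have ci: "[g ^ i = x] (mod p)" using i x by (simp add: cong_def)
  show le: "dlog p g x < p - 1"
    using Least_le[of "\<lambda>n. [g ^ n = x] (mod p)" i, OF ci] i unfolding dlog_def by linarith
  show c: "[g ^ dlog p g x = x] (mod p)"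
    unfolding dlog_def by (rule LeastI[of "\<lambda>n. [g ^ n = x] (mod p)" i, OF ci])
  have inj: "inj_on (\<lambda>i. g ^ i mod p) {..<p - 1}" using bij by (rule bij_betw_imp_inj_on)
  fix s assume s: "s < p - 1"
  show "[g ^ s = x] (mod p) \<longleftrightarrow> s = dlog p g x"
  proof
    assume "[g ^ s = x] (mod p)"
    hence "g ^ s mod p = g ^ dlog p g x mod p" using c by (simp add: cong_def)
    thus "s = dlog p g x" using inj s le by (auto dest: inj_onD)
  qed (use c in simp)
qed


lemma inner_sum:
  assumes p: "prime p" and g: "residue_primroot p g"
  shows "(\<Sum>s<p - 1. ex p (c * int (g ^ s))) = (if int p dvd c then of_nat p else 0) - 1"
proof -
  have pp: "p > 0" using prime_gt_0_nat[OF p] .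
  have "(\<Sum>s<p - 1. ex p (c * int (g ^ s))) = (\<Sum>s<p - 1. ex p (c * int (g ^ s mod p)))"
  proof (intro sum.cong refl ex_cong[OF pp])
    fix s show "c * int (g ^ s) mod int p = c * int (g ^ s mod p) mod int p"
      by (simp add: of_nat_mod mod_mult_right_eq)
  qed
  also have "\<dots> = (\<Sum>y\<in>{0<..<p}. ex p (c * int y))"
    by (rule sum.reindex_bij_betw[OF gen_bij[OF p g], of "\<lambda>y. ex p (c * int y)"])
  also have "\<dots> = (\<Sum>y<p. ex p (int y * c)) - 1"
  proof -
    have "{..<p} = insert 0 {0<..<p}" using pp by auto
    hence "(\<Sum>y<p. ex p (int y * c)) = 1 + (\<Sum>y\<in>{0<..<p}. ex p (c * int y))"
      by (simp add: mult.commute)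
    thus ?thesis by simp
  qed
  also have "\<dots> = (if int p dvd c then of_nat p else 0) - 1" by (simp add: ortho[OF pp])
  finally show ?thesis .
qed

lemma term_shift:
  assumes p: "prime p" and g: "residue_primroot p g" and q: "q = p - 1"
  shows "ex q (k * int ((s' + t) mod q)) * ex p (b * int (g ^ ((s' + t) mod q))) *
           (ex q (- (k * int s')) * ex p (- (b * int (g ^ s'))))
         = ex q (k * int t) * ex p (b * (int (g ^ t) - 1) * int (g ^ s'))"
proof -
  have pp: "p > 0" using prime_gt_0_nat[OF p] .
  have qp: "q > 0" using prime_gt_1_nat[OF p] q by simp
  have h1: "ex q (k * int ((s' + t) mod q)) = ex q (k * (int s' + int t))"
    by (rule ex_cong[OF qp]) (simp add: of_nat_mod mod_mult_right_eq)
  have c: "[g ^ (s' + t) = g ^ ((s' + t) mod q)] (mod p)" using pow_mod_q[OF p g] q by simp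
  hence "int (g ^ ((s' + t) mod q) mod p) = int (g ^ (s' + t) mod p)"
    by (simp add: cong_def)
  hence "int (g ^ ((s' + t) mod q)) mod int p = int (g ^ (s' + t)) mod int p"
    by (simp only: of_nat_mod)
  hence h2: "ex p (b * int (g ^ ((s' + t) mod q))) = ex p (b * (int (g ^ s') * int (g ^ t)))"
    by (intro ex_cong[OF pp]) (metis mod_mult_right_eq of_nat_mult power_add)
  have h3: "ex q (k * (int s' + int t)) * ex q (- (k * int s')) = ex q (k * int t)"
    by (simp add: ex_add[symmetric] algebra_simps)
  have h4: "ex p (b * (int (g ^ s') * int (g ^ t))) * ex p (- (b * int (g ^ s')))
            = ex p (b * (int (g ^ t) - 1) * int (g ^ s'))"
    by (simp add: ex_add[symmetric] algebra_simps)
  show ?thesis using h1 h2 h3 h4 by (simp add: algebra_simps)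
qed


definition Gs :: "nat \<Rightarrow> nat \<Rightarrow> int \<Rightarrow> int \<Rightarrow> complex" where
  "Gs p g k b = (\<Sum>s<p - 1. ex (p - 1) (k * int s) * ex p (b * int (g ^ s)))"

lemma shift_bij:
  fixes q s' :: nat
  assumes "q > 0" shows "bij_betw (\<lambda>t. (s' + t) mod q) {..<q} {..<q}"
proof -
  have inj: "inj_on (\<lambda>t. (s' + t) mod q) {..<q}"
  proof
    fix t t' assume t: "t \<in> {..<q}" "t' \<in> {..<q}" and e: "(s' + t) mod q = (s' + t') mod q"
    hence "[s' + t = s' + t'] (mod q)" by (simp add: cong_def)
    hence "[t = t'] (mod q)" by (simp add: cong_add_lcancel_nat)
    thus "t = t'" using t by (simp add: cong_def)
  qed
  have sub: "(\<lambda>t. (s' + t) mod q) ` {..<q} \<subseteq> {..<q}" using assms by auto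
  have "(\<lambda>t. (s' + t) mod q) ` {..<q} = {..<q}" by (rule endo_inj_surj[OF _ sub inj]) simp
  thus ?thesis using inj by (simp add: bij_betw_def)
qed

lemma gauss_sq:
  assumes p: "prime p" and g: "residue_primroot p g" and b: "\<not> int p dvd b"
  shows "Gs p g k b * cnj (Gs p g k b) = of_nat p - (if int (p - 1) dvd k then of_nat (p - 1) else 0)"
proof -
  define q where "q = p - 1"
  have pp: "p > 0" using prime_gt_0_nat[OF p] .
  have qp: "q > 0" using prime_gt_1_nat[OF p] q_def by simp
  define f where "f s = ex q (k * int s) * ex p (b * int (g ^ s))" for s
  have cf: "cnj (f s) = ex q (- (k * int s)) * ex p (- (b * int (g ^ s)))" for s
    by (simp add: f_def ex_neg)
  have "Gs p g k b * cnj (Gs p g k b) = (\<Sum>s<q. f s) * (\<Sum>s'<q. cnj (f s'))"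
    by (simp add: Gs_def f_def q_def)
  also have "\<dots> = (\<Sum>s'<q. \<Sum>s<q. f s * cnj (f s'))"
    by (subst sum_product) (rule sum.swap)
  also have "\<dots> = (\<Sum>s'<q. \<Sum>t<q. ex q (k * int t) * ex p (b * (int (g ^ t) - 1) * int (g ^ s')))"
  proof (rule sum.cong[OF refl])
    fix s' assume "s' \<in> {..<q}"
    have "(\<Sum>s<q. f s * cnj (f s')) = (\<Sum>t<q. f ((s' + t) mod q) * cnj (f s'))"
      by (rule sum.reindex_bij_betw[OF shift_bij[OF qp], symmetric])
    also have "\<dots> = (\<Sum>t<q. ex q (k * int t) * ex p (b * (int (g ^ t) - 1) * int (g ^ s')))"
      unfolding cf unfolding f_def by (rule sum.cong[OF refl], rule term_shift[OF p g q_def])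
    finally show "(\<Sum>s<q. f s * cnj (f s')) = \<dots>" .
  qed
  also have "\<dots> = (\<Sum>t<q. ex q (k * int t) * (\<Sum>s'<q. ex p (b * (int (g ^ t) - 1) * int (g ^ s'))))"
    by (subst sum.swap) (simp add: sum_distrib_left)
  also have "\<dots> = (\<Sum>t<q. ex q (k * int t) * ((if t = 0 then of_nat p else 0) - 1))"
  proof (intro sum.cong refl)
    fix t assume t: "t \<in> {..<q}"
    have "int p dvd b * (int (g ^ t) - 1) \<longleftrightarrow> int p dvd (int (g ^ t) - 1)"
      using b p by (simp add: prime_dvd_mult_iff)
    also have "\<dots> \<longleftrightarrow> [int (g ^ t) = int 1] (mod int p)"
      by (simp add: cong_iff_dvd_diff)
    also have "\<dots> \<longleftrightarrow> [g ^ t = 1] (mod p)" by (rule cong_int_iff)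
    also have "\<dots> \<longleftrightarrow> t = 0" using pow_eq_1[OF p g] t q_def by simp
    finally have "int p dvd b * (int (g ^ t) - 1) \<longleftrightarrow> t = 0" .
    thus "ex q (k * int t) * (\<Sum>s'<q. ex p (b * (int (g ^ t) - 1) * int (g ^ s'))) =
          ex q (k * int t) * ((if t = 0 then of_nat p else 0) - 1)"
      using inner_sum[OF p g, of "b * (int (g ^ t) - 1)"] by (simp add: q_def)
  qed
  also have "\<dots> = (\<Sum>t<q. (if t = 0 then of_nat p else 0) - ex q (int t * k))"
    by (intro sum.cong refl) (auto simp: algebra_simps)
  also have "\<dots> = of_nat p - (\<Sum>t<q. ex q (int t * k))"
    using qp by (simp add: sum_subtractf)
  also have "\<dots> = of_nat p - (if int q dvd k then of_nat q else 0)" by (simp add: ortho[OF qp])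
  finally show ?thesis by (simp add: q_def)
qed

lemma gauss_norm:
  assumes p: "prime p" and g: "residue_primroot p g" and b: "\<not> int p dvd b"
  shows "norm (Gs p g k b) \<le> sqrt p"
proof -
  have "complex_of_real ((norm (Gs p g k b))\<^sup>2) = of_nat p - (if int (p - 1) dvd k then of_nat (p - 1) else 0)"
    by (simp only: complex_norm_square gauss_sq[OF p g b])
  hence "(norm (Gs p g k b))\<^sup>2 = real p - (if int (p - 1) dvd k then real (p - 1) else 0)"
    by (simp add: complex_eq_iff split: if_splits)
  hence "(norm (Gs p g k b))\<^sup>2 \<le> real p" by (simp split: if_splits)
  thus ?thesis by (simp add: real_le_rsqrt)
qed


lemma indicator_expand:
  assumes qp: "q > 0" and s: "s < q" and I: "I \<subseteq> {..<q}" and fin: "finite I"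
  shows "(if s \<in> I then 1 else 0 :: complex) =
         (\<Sum>k<q. \<Sum>s'\<in>I. ex q (int k * int s) * ex q (- (int k * int s'))) / of_nat q"
proof -
  have "(\<Sum>k<q. \<Sum>s'\<in>I. ex q (int k * int s) * ex q (- (int k * int s')))
        = (\<Sum>s'\<in>I. \<Sum>k<q. ex q (int k * (int s - int s')))"
    by (subst sum.swap) (simp add: ex_add[symmetric] algebra_simps)
  also have "\<dots> = (\<Sum>s'\<in>I. if s' = s then of_nat q else 0)"
  proof (intro sum.cong refl)
    fix s' assume "s' \<in> I"
    hence s': "s' < q" using I by auto
    have "int q dvd (int s - int s') \<longleftrightarrow> s' = s"
    proof
      assume "int q dvd (int s - int s')"
      hence "[int s = int s'] (mod int q)" by (simp add: cong_iff_dvd_diff)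
      hence "[s = s'] (mod q)" by (simp add: cong_int_iff)
      thus "s' = s" using s s' by (simp add: cong_def)
    qed simp
    thus "(\<Sum>k<q. ex q (int k * (int s - int s'))) = (if s' = s then of_nat q else 0)"
      by (simp add: ortho[OF qp])
  qed
  also have "\<dots> = (if s \<in> I then of_nat q else 0)" using fin by (simp add: sum.delta')
  finally show ?thesis using qp by simp
qed

lemma A_bound:
  assumes p: "prime p" and g: "residue_primroot p g" and p2: "p > 2"
    and b: "\<not> int p dvd b" and hi: "hi \<le> p - 1"
  shows "norm (\<Sum>s\<in>{lo..<hi}. ex p (b * int (g ^ s))) \<le> sqrt p * (3 + 2 * ln (p - 1))"
proof -
  define q where "q = p - 1"
  define I where "I = {lo..<hi}"
  define e where "e s = ex p (b * int (g ^ s))" for s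
  have q2: "q \<ge> 2" using p2 q_def by simp
  hence qp: "q > 0" by simp
  have I: "I \<subseteq> {..<q}" "finite I" using hi by (auto simp: I_def q_def)
  define C where "C k = (\<Sum>s'\<in>I. ex q (- (int k * int s')))" for k :: nat
  have "(\<Sum>s\<in>I. e s) = (\<Sum>s<q. (if s \<in> I then 1 else 0) * e s)"
  proof -
    have "(\<Sum>s<q. (if s \<in> I then 1 else 0) * e s) = (\<Sum>s<q. if s \<in> I then e s else 0)"
      by (intro sum.cong) auto
    also have "\<dots> = (\<Sum>s\<in>{..<q} \<inter> I. e s)"
      by (simp add: sum.inter_restrict)
    also have "{..<q} \<inter> I = I" using I by auto
    finally show ?thesis by simp
  qed
  also have "\<dots> = (\<Sum>s<q. (\<Sum>k<q. \<Sum>s'\<in>I. ex q (int k * int s) * ex q (- (int k * int s')) * e s) / of_nat q)"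
    by (intro sum.cong refl, subst indicator_expand[OF qp _ I]) (auto simp: sum_distrib_right)
  also have "\<dots> = (\<Sum>k<q. \<Sum>s'\<in>I. \<Sum>s<q. ex q (int k * int s) * ex q (- (int k * int s')) * e s) / of_nat q"
  proof -
    have "(\<Sum>s<q. \<Sum>k<q. \<Sum>s'\<in>I. ex q (int k * int s) * ex q (- (int k * int s')) * e s)
        = (\<Sum>k<q. \<Sum>s<q. \<Sum>s'\<in>I. ex q (int k * int s) * ex q (- (int k * int s')) * e s)"
      by (rule sum.swap)
    also have "\<dots> = (\<Sum>k<q. \<Sum>s'\<in>I. \<Sum>s<q. ex q (int k * int s) * ex q (- (int k * int s')) * e s)"
      by (rule sum.cong[OF refl], rule sum.swap)
    finally have eq: "(\<Sum>s<q. \<Sum>k<q. \<Sum>s'\<in>I. ex q (int k * int s) * ex q (- (int k * int s')) * e s)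
        = (\<Sum>k<q. \<Sum>s'\<in>I. \<Sum>s<q. ex q (int k * int s) * ex q (- (int k * int s')) * e s)" .
    show ?thesis by (simp only: sum_divide_distrib[symmetric] eq)
  qed
  also have "\<dots> = (\<Sum>k<q. C k * Gs p g (int k) b) / of_nat q"
    by (simp add: C_def Gs_def e_def q_def sum_product mult_ac)
  finally have Aeq: "(\<Sum>s\<in>I. e s) = (\<Sum>k<q. C k * Gs p g (int k) b) / of_nat q" .
  have Cb: "norm (C k) \<le> real q" for k
  proof -
    have "norm (C k) \<le> (\<Sum>s'\<in>I. norm (ex q (- (int k * int s'))))" unfolding C_def by (rule norm_sum)
    also have "\<dots> = card I" by simp
    also have "\<dots> \<le> card {..<q}" using card_mono[OF _ I(1)] by simp
    finally show ?thesis by simp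
  qed
  have Ck: "norm (C k) \<le> q / mm q (int k * -1)" if k: "k \<in> {1..<q}" for k
  proof -
    have "\<not> int q dvd int k * -1" using k by (auto dest: zdvd_imp_le)
    from geom_bound[OF qp this, of lo hi] show ?thesis by (simp add: C_def I_def)
  qed
  have "(\<Sum>k<q. norm (C k)) = norm (C 0) + (\<Sum>k\<in>{1..<q}. norm (C k))"
  proof -
    have "{..<q} = insert 0 {1..<q}" using qp by auto
    thus ?thesis by simp
  qed
  also have "\<dots> \<le> q + (\<Sum>k\<in>{1..<q}. q / mm q (int k * -1))"
    by (intro add_mono Cb sum_mono Ck)
  also have "\<dots> \<le> q + 2 * real q * (1 + ln q)"
    using sum_inv_bound_r[OF q2, of "-1"] by simp
  finally have sC: "(\<Sum>k<q. norm (C k)) \<le> q + 2 * real q * (1 + ln q)" .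
  have "norm (\<Sum>k<q. C k * Gs p g (int k) b) \<le> (\<Sum>k<q. norm (C k) * sqrt p)"
    by (rule order_trans[OF norm_sum sum_mono]) (simp add: norm_mult gauss_norm[OF p g b] mult_left_mono)
  also have "\<dots> = (\<Sum>k<q. norm (C k)) * sqrt p" by (simp add: sum_distrib_right)
  also have "\<dots> \<le> (q + 2 * real q * (1 + ln q)) * sqrt p" by (intro mult_right_mono sC) simp
  finally have "norm (\<Sum>s\<in>I. e s) \<le> (q + 2 * real q * (1 + ln q)) * sqrt p / q"
    unfolding Aeq using qp by (simp add: norm_divide divide_right_mono)
  also have "\<dots> = sqrt p * (3 + 2 * ln q)" using qp by (simp add: field_simps)
  finally show ?thesis using p2 by (simp add: I_def e_def q_def of_nat_diff)
qed


lemma B_sum_bound: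
  assumes p: "prime p" and p2: "p > 2" and r: "0 < r" "r < p"
  shows "(\<Sum>b\<in>{1..<p}. norm (\<Sum>j\<in>{1..N}. ex p (- (int b * int (a + j * r)))))
           \<le> 2 * real p * (1 + ln p)"
proof -
  have pp: "p > 0" using p2 by simp
  have cop: "coprime (int p) (- int r)"
  proof -
    have "\<not> p dvd r" using r by (auto dest: dvd_imp_le)
    hence "coprime p r" using p by (simp add: prime_imp_coprime)
    thus ?thesis by simp
  qed
  have "(\<Sum>b\<in>{1..<p}. norm (\<Sum>j\<in>{1..N}. ex p (- (int b * int (a + j * r)))))
        \<le> (\<Sum>b\<in>{1..<p}. real p / mm p (int b * - int r))"
  proof (rule sum_mono)
    fix b assume b: "b \<in> {1..<p}"
    have nd: "\<not> int p dvd int b * - int r"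
    proof
      assume "int p dvd int b * - int r"
      hence "int p dvd int b * int r" by simp
      hence "p dvd b * r" by (metis of_nat_mult int_dvd_int_iff)
      hence "p dvd b \<or> p dvd r" using p by (simp add: prime_dvd_mult_iff)
      thus False using b r by (auto dest: dvd_imp_le)
    qed
    have "(\<Sum>j\<in>{1..N}. ex p (- (int b * int (a + j * r))))
          = ex p (- (int b * int a)) * (\<Sum>j\<in>{1..<N+1}. ex p ((int b * - int r) * int j))"
      by (simp add: sum_distrib_left ex_add[symmetric] algebra_simps atLeastLessThanSuc_atLeastAtMost)
    hence "norm (\<Sum>j\<in>{1..N}. ex p (- (int b * int (a + j * r))))
           = norm (\<Sum>j\<in>{1..<N+1}. ex p ((int b * - int r) * int j))"
      by (simp add: norm_mult)
    also have "\<dots> \<le> real p / mm p (int b * - int r)" by (rule geom_bound[OF pp nd])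
    finally show "norm (\<Sum>j\<in>{1..N}. ex p (- (int b * int (a + j * r)))) \<le> real p / mm p (int b * - int r)" .
  qed
  also have "\<dots> \<le> 2 * real p * (1 + ln p)" using p2 by (intro sum_inv_bound_r cop) simp
  finally show ?thesis .
qed

lemma main_identity:
  assumes p: "prime p" and g: "residue_primroot p g" and J: "finite J"
    and x: "\<And>j. j \<in> J \<Longrightarrow> 0 < x j \<and> x j < p"
    and I: "I \<subseteq> {..<p - 1}" "finite I"
  shows "of_nat p * of_nat (card {j\<in>J. dlog p g (x j) \<in> I})
         = of_nat (card I) * of_nat (card J) +
           (\<Sum>b\<in>{1..<p}. (\<Sum>s\<in>I. ex p (int b * int (g ^ s))) *
                          (\<Sum>j\<in>J. ex p (- (int b * int (x j)))))"
proof -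
  have pp: "p > 0" using prime_gt_0_nat[OF p] .
  have key: "(\<Sum>s\<in>I. \<Sum>b<p. ex p (int b * int (g ^ s)) * ex p (- (int b * int (x j))))
             = (if dlog p g (x j) \<in> I then of_nat p else 0)" if j: "j \<in> J" for j
  proof -
    have "(\<Sum>s\<in>I. \<Sum>b<p. ex p (int b * int (g ^ s)) * ex p (- (int b * int (x j))))
          = (\<Sum>s\<in>I. if s = dlog p g (x j) then of_nat p else 0)"
    proof (intro sum.cong refl)
      fix s assume "s \<in> I"
      hence s: "s < p - 1" using I by auto
      have "int p dvd (int (g ^ s) - int (x j)) \<longleftrightarrow> [int (g ^ s) = int (x j)] (mod int p)"
        by (simp add: cong_iff_dvd_diff)
      also have "\<dots> \<longleftrightarrow> [g ^ s = x j] (mod p)" by (rule cong_int_iff)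
      also have "\<dots> \<longleftrightarrow> s = dlog p g (x j)" using dlog_props(3)[OF p g _ _ s] x[OF j] by auto
      finally have e: "int p dvd (int (g ^ s) - int (x j)) \<longleftrightarrow> s = dlog p g (x j)" .
      have "(\<Sum>b<p. ex p (int b * int (g ^ s)) * ex p (- (int b * int (x j))))
            = (\<Sum>b<p. ex p (int b * (int (g ^ s) - int (x j))))"
        by (simp add: ex_add[symmetric] algebra_simps)
      also have "\<dots> = (if s = dlog p g (x j) then of_nat p else 0)" by (subst ortho[OF pp]) (simp only: e)
      finally show "(\<Sum>b<p. ex p (int b * int (g ^ s)) * ex p (- (int b * int (x j)))) = \<dots>" .
    qed
    also have "\<dots> = (if dlog p g (x j) \<in> I then of_nat p else 0)" using I by (simp add: sum.delta')
    finally show ?thesis .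
  qed
  have "of_nat p * of_nat (card {j\<in>J. dlog p g (x j) \<in> I})
        = (\<Sum>j\<in>J. if dlog p g (x j) \<in> I then of_nat p else (0::complex))"
    using J by (simp add: sum.If_cases Int_def)
  also have "\<dots> = (\<Sum>j\<in>J. \<Sum>s\<in>I. \<Sum>b<p. ex p (int b * int (g ^ s)) * ex p (- (int b * int (x j))))"
    by (intro sum.cong refl key[symmetric])
  also have "\<dots> = (\<Sum>b<p. (\<Sum>s\<in>I. ex p (int b * int (g ^ s))) * (\<Sum>j\<in>J. ex p (- (int b * int (x j)))))"
  proof -
    have "(\<Sum>j\<in>J. \<Sum>s\<in>I. \<Sum>b<p. ex p (int b * int (g ^ s)) * ex p (- (int b * int (x j))))
        = (\<Sum>j\<in>J. \<Sum>b<p. \<Sum>s\<in>I. ex p (int b * int (g ^ s)) * ex p (- (int b * int (x j))))"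
      by (rule sum.cong[OF refl], rule sum.swap)
    also have "\<dots> = (\<Sum>b<p. \<Sum>j\<in>J. \<Sum>s\<in>I. ex p (int b * int (g ^ s)) * ex p (- (int b * int (x j))))"
      by (rule sum.swap)
    also have "\<dots> = (\<Sum>b<p. (\<Sum>s\<in>I. ex p (int b * int (g ^ s))) * (\<Sum>j\<in>J. ex p (- (int b * int (x j)))))"
      by (rule sum.cong[OF refl]) (simp add: sum_product, rule sum.swap)
    finally show ?thesis .
  qed
  also have "\<dots> = of_nat (card I) * of_nat (card J) +
           (\<Sum>b\<in>{1..<p}. (\<Sum>s\<in>I. ex p (int b * int (g ^ s))) * (\<Sum>j\<in>J. ex p (- (int b * int (x j)))))"
  proof -
    have "{..<p} = insert 0 {1..<p}" using pp by auto
    thus ?thesis by simp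
  qed
  finally show ?thesis .
qed


lemma count_bound:
  assumes p: "prime p" and p2: "p > 2" and g: "residue_primroot p g" and r: "r > 0" and N: "N > 0"
    and ap: "\<forall>j\<in>{1..N}. 1 \<le> a + j * r \<and> a + j * r \<le> p - 1"
    and u: "0 \<le> u" and M: "M > 0" and uM: "u + M \<le> real (p - 1)"
  shows "\<bar>real (card {x \<in> (\<lambda>j. dlog p g (a + j * r)) ` {1..N}. u \<le> real x \<and> real x \<le> u + M})
           - M * real N / real p\<bar> \<le> 22 * sqrt p * (ln p)\<^sup>2"
proof -
  define x where "x j = a + j * r" for j
  define J where "J = {1..N}"
  define lo where "lo = nat \<lceil>u\<rceil>"
  define hi where "hi = min (nat \<lfloor>u + M\<rfloor> + 1) (p - 1)"
  define I where "I = {lo..<hi}"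
  define f where "f j = dlog p g (x j)" for j
  define K where "K = card {j\<in>J. f j \<in> I}"
  have pp: "p > 0" using p2 by simp
  have xr: "0 < x j \<and> x j < p" if "j \<in> J" for j
  proof -
    have h: "1 \<le> a + j * r \<and> a + j * r \<le> p - 1" using ap that by (simp add: J_def)
    thus ?thesis using p2 unfolding x_def by arith
  qed
  have rp: "r < p"
  proof -
    have "1 \<in> {1..N}" using N by simp
    hence "a + 1 * r \<le> p - 1" using ap by blast
    thus ?thesis using p2 by arith
  qed
  have fl: "f j < p - 1" if "j \<in> J" for j
    using dlog_props(1)[OF p g] xr[OF that] by (simp add: f_def)
  have inj: "inj_on f J"
  proof
    fix j j' assume j: "j \<in> J" "j' \<in> J" and e: "f j = f j'"
    have "[g ^ f j = x j] (mod p)" "[g ^ f j' = x j'] (mod p)"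
      using dlog_props(2)[OF p g] xr j by (auto simp: f_def)
    hence "[x j = x j'] (mod p)" using e by (metis cong_sym cong_trans)
    hence "x j = x j'" using xr j by (simp add: cong_def)
    thus "j = j'" using r by (simp add: x_def)
  qed
  have memI: "y \<in> I \<longleftrightarrow> u \<le> real y \<and> real y \<le> u + M" if y: "y < p - 1" for y
  proof -
    have "lo \<le> y \<longleftrightarrow> u \<le> real y" unfolding lo_def by (simp add: nat_le_iff ceiling_le_iff)
    moreover have "y < nat \<lfloor>u + M\<rfloor> + 1 \<longleftrightarrow> real y \<le> u + M"
    proof -
      have "y < nat \<lfloor>u + M\<rfloor> + 1 \<longleftrightarrow> int y \<le> \<lfloor>u + M\<rfloor>" using u M by linarith
      also have "\<dots> \<longleftrightarrow> real y \<le> u + M" by (simp add: le_floor_iff)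
      finally show ?thesis .
    qed
    ultimately show ?thesis using y by (auto simp: I_def hi_def)
  qed
  have setEq: "{y \<in> (\<lambda>j. dlog p g (a + j * r)) ` {1..N}. u \<le> real y \<and> real y \<le> u + M}
               = f ` {j\<in>J. f j \<in> I}"
    using fl memI by (auto simp: f_def x_def J_def)
  have cardK: "card {y \<in> (\<lambda>j. dlog p g (a + j * r)) ` {1..N}. u \<le> real y \<and> real y \<le> u + M} = K"
    unfolding setEq K_def by (rule card_image) (rule inj_on_subset[OF inj], auto)
  have cI: "real (card I) = real hi - real lo \<or> (hi < lo \<and> card I = 0)" by (auto simp: I_def)
  have lo1: "real lo < u + 1" "u \<le> real lo" using u by (auto simp: lo_def) linarith+
  have hi1: "real hi \<le> u + M + 1" "u + M - 1 < real hi" using u M uM by (auto simp: hi_def) linarith+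
  have cIb: "M - 2 \<le> real (card I)" "real (card I) \<le> M + 1"
    using cI lo1 hi1 M by auto
  have NJ: "card J = N" by (simp add: J_def)
  have Np: "real N \<le> real p"
  proof -
    have "N \<le> N * r" using r by simp
    also have "\<dots> \<le> p - 1"
    proof -
      have "N \<in> {1..N}" using N by simp
      hence "a + N * r \<le> p - 1" using ap by blast
      thus ?thesis by arith
    qed
    finally show ?thesis by simp
  qed
  define S where "S = (\<Sum>b\<in>{1..<p}. (\<Sum>s\<in>I. ex p (int b * int (g ^ s))) *
                          (\<Sum>j\<in>J. ex p (- (int b * int (x j)))))"
  have Isub: "I \<subseteq> {..<p - 1}" "finite I" by (auto simp: I_def hi_def)
  have mid: "of_nat p * of_nat K = of_nat (card I) * of_nat N + S"
  proof -
    have fJ: "finite J" by (simp add: J_def)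
    show ?thesis using main_identity[of p g J x I, OF p g fJ xr Isub] NJ by (simp add: K_def f_def S_def)
  qed
  define L where "L = ln (real p)"
  have L1: "1 \<le> L"
  proof -
    have "exp 1 \<le> (3::real)" by (rule exp_le)
    hence "1 \<le> ln (3::real)" by (simp add: ln_ge_iff)
    also have "\<dots> \<le> L" using p2 by (simp add: L_def)
    finally show ?thesis .
  qed
  have Lq: "ln (real p - 1) \<le> L" using p2 by (simp add: L_def)
  have Ab: "norm (\<Sum>s\<in>I. ex p (int b * int (g ^ s))) \<le> sqrt p * (3 + 2 * L)" if b: "b \<in> {1..<p}" for b
  proof -
    have "\<not> int p dvd int b" using b by (auto dest: zdvd_imp_le)
    from A_bound[OF p g p2 this, of hi lo] have "norm (\<Sum>s\<in>I. ex p (int b * int (g ^ s))) \<le> sqrt p * (3 + 2 * ln (real p - 1))"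
      by (simp add: I_def hi_def)
    also have "\<dots> \<le> sqrt p * (3 + 2 * L)" using Lq by (intro mult_left_mono) auto
    finally show ?thesis .
  qed
  have Sb: "norm S \<le> sqrt p * (3 + 2 * L) * (2 * real p * (1 + L))"
  proof -
    have "norm S \<le> (\<Sum>b\<in>{1..<p}. norm (\<Sum>s\<in>I. ex p (int b * int (g ^ s))) * norm (\<Sum>j\<in>J. ex p (- (int b * int (x j)))))"
      unfolding S_def by (rule order_trans[OF norm_sum]) (simp add: norm_mult)
    also have "\<dots> \<le> (\<Sum>b\<in>{1..<p}. sqrt p * (3 + 2 * L) * norm (\<Sum>j\<in>J. ex p (- (int b * int (x j)))))"
      by (intro sum_mono mult_right_mono Ab) auto
    also have "\<dots> = sqrt p * (3 + 2 * L) * (\<Sum>b\<in>{1..<p}. norm (\<Sum>j\<in>J. ex p (- (int b * int (x j)))))"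
      by (simp add: sum_distrib_left)
    also have "\<dots> \<le> sqrt p * (3 + 2 * L) * (2 * real p * (1 + L))"
      using B_sum_bound[OF p p2 r rp, of a N] L1 by (intro mult_left_mono) (auto simp: J_def x_def L_def)
    finally show ?thesis .
  qed
  have "\<bar>real p * real K - real (card I) * real N\<bar> = norm S"
  proof -
    have "S = complex_of_real (real p * real K - real (card I) * real N)" using mid by simp
    thus ?thesis by (simp only: norm_of_real)
  qed
  hence E1: "\<bar>real p * real K - real (card I) * real N\<bar> \<le> sqrt p * (3 + 2 * L) * (2 * real p * (1 + L))"
    using Sb by simp
  have E2: "\<bar>real K - real (card I) * real N / real p\<bar> \<le> sqrt p * (3 + 2 * L) * (2 * (1 + L))"
  proof -
    have "\<bar>real K - real (card I) * real N / real p\<bar> = \<bar>real p * real K - real (card I) * real N\<bar> / real p"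
      using pp by (simp add: field_simps abs_divide[symmetric])
    also have "\<dots> \<le> sqrt p * (3 + 2 * L) * (2 * real p * (1 + L)) / real p"
      using E1 pp by (intro divide_right_mono) auto
    also have "\<dots> = sqrt p * (3 + 2 * L) * (2 * (1 + L))" using pp by simp
    finally show ?thesis .
  qed
  have E3: "\<bar>real (card I) * real N / real p - M * real N / real p\<bar> \<le> 2"
  proof -
    have "\<bar>real (card I) * real N / real p - M * real N / real p\<bar> = \<bar>real (card I) - M\<bar> * (real N / real p)"
    proof -
      have "real (card I) * real N / real p - M * real N / real p = (real (card I) - M) * (real N / real p)"
        using pp by (simp add: field_simps)
      thus ?thesis by (simp add: abs_mult)
    qed
    also have "\<dots> \<le> 2 * 1"
      using cIb Np pp by (intro mult_mono) auto
    finally show ?thesis by simp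
  qed
  have E4: "sqrt p * (3 + 2 * L) * (2 * (1 + L)) \<le> 20 * sqrt p * L\<^sup>2"
  proof -
    have a1: "L \<le> L * L" using L1 by (simp add: mult_le_cancel_left1)
    have a2: "1 \<le> L * L" using mult_mono[OF L1 L1] L1 by simp
    have "(3 + 2 * L) * (2 * (1 + L)) = 6 + 10 * L + 4 * (L * L)" by (simp add: algebra_simps)
    hence "(3 + 2 * L) * (2 * (1 + L)) \<le> 20 * L\<^sup>2" using a1 a2 by (simp add: power2_eq_square)
    hence "sqrt p * ((3 + 2 * L) * (2 * (1 + L))) \<le> sqrt p * (20 * L\<^sup>2)" by (rule mult_left_mono) simp
    thus ?thesis by (simp only: mult_ac)
  qed
  have sp1: "1 \<le> sqrt p * L\<^sup>2"
  proof -
    have "1 \<le> sqrt p" using pp by simp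
    moreover have "1 \<le> L\<^sup>2" using mult_mono[OF L1 L1] L1 by (simp add: power2_eq_square)
    ultimately show ?thesis using mult_mono[of 1 "sqrt p" 1 "L\<^sup>2"] by simp
  qed
  have tri: "\<bar>real K - M * real N / real p\<bar> \<le> \<bar>real K - real (card I) * real N / real p\<bar>
      + \<bar>real (card I) * real N / real p - M * real N / real p\<bar>"
    using abs_triangle_ineq[of "real K - real (card I) * real N / real p"
        "real (card I) * real N / real p - M * real N / real p"] by simp
  have r20: "20 * sqrt p * L\<^sup>2 = 20 * (sqrt p * L\<^sup>2)" "22 * sqrt p * L\<^sup>2 = 22 * (sqrt p * L\<^sup>2)"
    by (simp_all only: mult.assoc)
  have "\<bar>real K - M * real N / real p\<bar> \<le> 22 * sqrt p * L\<^sup>2"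
    using tri E2 E3 E4 sp1 unfolding r20 by linarith
  thus ?thesis using cardK by (simp add: L_def)
qed


theorem corollary1:
  "\<exists>c3 :: real. c3 > 0 \<and>
    (\<forall>(p::nat) (g::nat) (a::nat) (r::nat) (N::nat) (\<delta>::real) (u::real) (M::real).
      prime p \<and> p > 2 \<and> residue_primroot p g \<and> r > 0 \<and> N > 0 \<and>
      (\<forall>j\<in>{1..N}. 1 \<le> a + j * r \<and> a + j * r \<le> p - 1) \<and>
      \<delta> > 0 \<and> M > 0 \<and> 0 \<le> u \<and> u + M \<le> real (p - 1) \<and>
      M * real N > c3 / \<delta> * real p powr (3/2) * (ln (real p))\<^sup>2
      \<longrightarrow>
      (let K = real (card {x \<in> (\<lambda>j. dlog p g (a + j * r)) ` {1..N}.
                              u \<le> real x \<and> real x \<le> u + M})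
       in (1 - \<delta>) * (M * real N / real p) \<le> K \<and> K \<le> (1 + \<delta>) * (M * real N / real p)))"
proof (intro exI[of _ 22] conjI allI impI)
  fix p g a r N :: nat and \<delta> u M :: real
  assume H: "prime p \<and> p > 2 \<and> residue_primroot p g \<and> r > 0 \<and> N > 0 \<and>
      (\<forall>j\<in>{1..N}. 1 \<le> a + j * r \<and> a + j * r \<le> p - 1) \<and>
      \<delta> > 0 \<and> M > 0 \<and> 0 \<le> u \<and> u + M \<le> real (p - 1) \<and>
      M * real N > 22 / \<delta> * real p powr (3/2) * (ln (real p))\<^sup>2"
  define K where "K = real (card {x \<in> (\<lambda>j. dlog p g (a + j * r)) ` {1..N}. u \<le> real x \<and> real x \<le> u + M})"
  define X where "X = M * real N / real p"
  define D where "D = sqrt p * (ln (real p))\<^sup>2"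
  have pp: "p > 0" using H by auto
  have cb: "\<bar>K - X\<bar> \<le> 22 * D"
  proof -
    have h: "prime p" "p > 2" "residue_primroot p g" "r > 0" "N > 0"
      "\<forall>j\<in>{1..N}. 1 \<le> a + j * r \<and> a + j * r \<le> p - 1" "0 \<le> u" "M > 0" "u + M \<le> real (p - 1)"
      using H by auto
    from count_bound[OF h] show ?thesis by (simp add: K_def X_def D_def mult.assoc)
  qed
  have pw: "real p powr (3/2) = real p * sqrt p"
  proof -
    have "real p powr (3/2) = real p powr (1 + 1/2)" by simp
    also have "\<dots> = real p * real p powr (1/2)" using pp by (subst powr_add) simp
    finally show ?thesis by (simp add: powr_half_sqrt)
  qed
  have "M * real N > 22 / \<delta> * (real p * D)" using H pw by (simp add: D_def mult.assoc)
  hence "\<delta> * (M * real N) > 22 * (real p * D)" using H by (simp add: field_simps)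
  hence dX: "\<delta> * X > 22 * D" using pp by (simp add: X_def field_simps)
  have "(1 - \<delta>) * X \<le> K \<and> K \<le> (1 + \<delta>) * X"
    using cb dX by (simp add: algebra_simps abs_le_iff)
  thus "let K = real (card {x \<in> (\<lambda>j. dlog p g (a + j * r)) ` {1..N}. u \<le> real x \<and> real x \<le> u + M})
       in (1 - \<delta>) * (M * real N / real p) \<le> K \<and> K \<le> (1 + \<delta>) * (M * real N / real p)"
    by (simp add: Let_def K_def X_def)
qed simp

end
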